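(* Let $n\ge 7$ and let $G\in B^{++}_n$. (1) $\mathrm{irr}_t(G)\ge 2n-4$. Equality holds if and only if the degree sequence of $G$ is $(3,3,2,\ldots,2)$, i.e. two vertices of degree $3$ and $n-2$ vertices of degree $2$. (2) If the degree sequence of $G$ is not $(3,3,2,\ldots,2)$, then $\mathrm{irr}_t(G)\ge 4n-10$. Equality holds if and only if the degree sequence of $G$ is $(3,3,3,2,\ldots,2,1)$, i.e. three vertices of degree $3$, $n-4$ vertices of degree $2$ and one vertex of degree $1$.
   Context: A bicyclic graph is a simple connected graph whose number of edges equals its number of vertices plus one. For a graph $G=(V,E)$ and $w\in V$, $d_G(w)$ is the degree of $w$. The total irregularity is $\mathrm{irr}_t(G)=\frac12\sum_{x,y\in V}|d_G(x)-d_G(y)|$, where the sum runs over all ordered pairs of vertices. Degree sequences are listed in nonincreasing order. For $p,q\ge 3$ and $l\ge 1$, the $\infty$-graph $\infty(p,q,l)$ is obtained from two vertex-disjoint cycles $C_p$ and $C_q$ by joining a vertex of $C_p$ and a vertex of $C_q$ with a path having $l$ vertices (i.e. length $l-1$). $B^{++}_n$ denotes the set of bicyclic graphs on $n$ vertices obtained from some $\infty(p,q,l)$ with $l\ge 2$ by attaching trees. Equivalently, these are the bicyclic graphs on $n$ vertices whose two cycles are vertex-disjoint. *)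

theory Defs
  imports Complex_Main "HOL-Library.Multiset"
begin

definition simple_graph :: "'a set \<Rightarrow> 'a set set \<Rightarrow> bool" where
  "simple_graph V E \<longleftrightarrow> finite V \<and> (\<forall>e\<in>E. \<exists>u v. e = {u, v} \<and> u \<in> V \<and> v \<in> V \<and> u \<noteq> v)"

definition adj :: "'a set set \<Rightarrow> 'a \<Rightarrow> 'a \<Rightarrow> bool" where
  "adj E u v \<longleftrightarrow> {u, v} \<in> E"

definition connected_graph :: "'a set \<Rightarrow> 'a set set \<Rightarrow> bool" where
  "connected_graph V E \<longleftrightarrow> V \<noteq> {} \<and> (\<forall>u\<in>V. \<forall>v\<in>V. (adj E)\<^sup>*\<^sup>* u v)"

definition deg :: "'a set set \<Rightarrow> 'a \<Rightarrow> nat" where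
  "deg E w = card {e \<in> E. w \<in> e}"

definition bicyclic :: "'a set \<Rightarrow> 'a set set \<Rightarrow> bool" where
  "bicyclic V E \<longleftrightarrow> simple_graph V E \<and> connected_graph V E \<and> card E = card V + 1"

definition is_cycle :: "'a set \<Rightarrow> 'a set set \<Rightarrow> 'a list \<Rightarrow> bool" where
  "is_cycle V E c \<longleftrightarrow> length c \<ge> 3 \<and> distinct c \<and> set c \<subseteq> V \<and>
     (\<forall>i < length c - 1. adj E (c ! i) (c ! Suc i)) \<and> adj E (last c) (hd c)"

definition in_Bpp :: "nat \<Rightarrow> 'a set \<Rightarrow> 'a set set \<Rightarrow> bool" where
  "in_Bpp n V E \<longleftrightarrow> bicyclic V E \<and> card V = n \<and>
     (\<exists>c1 c2. is_cycle V E c1 \<and> is_cycle V E c2 \<and> set c1 \<inter> set c2 = {})"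

definition irr_t :: "'a set \<Rightarrow> 'a set set \<Rightarrow> real" where
  "irr_t V E = (\<Sum>x\<in>V. \<Sum>y\<in>V. \<bar>real (deg E x) - real (deg E y)\<bar>) / 2"

definition degree_sequence :: "'a set \<Rightarrow> 'a set set \<Rightarrow> nat list" where
  "degree_sequence V E = rev (sorted_list_of_multiset (image_mset (deg E) (mset_set V)))"

end

theory Submission
  imports Defs
begin


lemma count_img: "finite V \<Longrightarrow> count (image_mset d (mset_set V)) k = card {v\<in>V. d v = k}"
  by (smt (verit, del_insts) Collect_cong count_conv_size_mset
    filter_mset_image_mset filter_mset_mset_set size_image_mset size_mset_set)

lemma degseq_iff:
  assumes "sorted (rev L)"
  shows "rev (sorted_list_of_multiset M) = L \<longleftrightarrow> M = mset L"
proof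
  assume "rev (sorted_list_of_multiset M) = L"
  then have "mset L = mset (sorted_list_of_multiset M)" by auto
  then show "M = mset L" by simp
next
  assume "M = mset L"
  then have "sorted_list_of_multiset M = sort L" by simp
  also have "\<dots> = rev L" using assms by (intro properties_for_sort) auto
  finally show "rev (sorted_list_of_multiset M) = L" by simp
qed

lemma sum3:
  assumes "finite V" "V = A \<union> B \<union> C" "A \<inter> B = {}" "A \<inter> C = {}" "B \<inter> C = {}"
  shows "(\<Sum>x\<in>V. g x) = (\<Sum>x\<in>A. g x) + (\<Sum>x\<in>B. g x) + (\<Sum>x\<in>C. g x)"
proof -
  have f: "finite A" "finite B" "finite C" using assms by auto
  have "(\<Sum>x\<in>V. g x) = (\<Sum>x\<in>A \<union> B. g x) + (\<Sum>x\<in>C. g x)"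
    using assms f by (simp add: sum.union_disjoint Int_Un_distrib2)
  also have "(\<Sum>x\<in>A \<union> B. g x) = (\<Sum>x\<in>A. g x) + (\<Sum>x\<in>B. g x)"
    using assms f by (simp add: sum.union_disjoint)
  finally show ?thesis .
qed

lemma sg_E:
  assumes "simple_graph V E"
  shows "finite E" "E \<subseteq> Pow V" "\<And>e. e\<in>E \<Longrightarrow> card e = 2"
proof -
  show sub: "E \<subseteq> Pow V" using assms by (auto simp: simple_graph_def)
  show "finite E" using assms sub by (meson finite_Pow_iff finite_subset simple_graph_def)
  fix e assume "e \<in> E"
  then obtain u v where "e = {u,v}" "u \<noteq> v" using assms unfolding simple_graph_def by blast
  then show "card e = 2" by simp
qed

lemma handshake:
  assumes sg: "simple_graph V E" shows "(\<Sum>v\<in>V. deg E v) = 2 * card E"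
proof -
  have fV: "finite V" using assms simple_graph_def by auto
  have fE: "finite E" using sg_E[OF sg] by auto
  have "(\<Sum>v\<in>V. deg E v) = (\<Sum>v\<in>V. \<Sum>e\<in>E. if v \<in> e then (1::nat) else 0)"
    unfolding deg_def using fE by (simp add: sum.inter_filter[symmetric])
  also have "\<dots> = (\<Sum>e\<in>E. \<Sum>v\<in>V. if v \<in> e then (1::nat) else 0)" by (rule sum.swap)
  also have "\<dots> = (\<Sum>e\<in>E. 2)"
  proof (rule sum.cong)
    fix e assume e: "e \<in> E"
    have "(\<Sum>v\<in>V. if v \<in> e then (1::nat) else 0) = card {v\<in>V. v \<in> e}"
      using fV by (simp add: sum.inter_filter[symmetric])
    also have "{v\<in>V. v \<in> e} = e" using sg_E(2)[OF sg] e by auto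
    finally show "(\<Sum>v\<in>V. if v \<in> e then (1::nat) else 0) = 2" using sg_E(3)[OF sg e] by simp
  qed simp
  finally show ?thesis by simp
qed

lemma deg_pos:
  assumes sg: "simple_graph V E" and con: "connected_graph V E" and c2: "card V \<ge> 2" and v: "v \<in> V"
  shows "deg E v \<ge> 1"
proof -
  have "\<exists>w\<in>V. w \<noteq> v"
  proof (rule ccontr)
    assume "\<not> ?thesis"
    then have "V \<subseteq> {v}" by auto
    then have "card V \<le> card {v}" by (intro card_mono) auto
    then show False using c2 by simp
  qed
  then obtain w where w: "w \<in> V" "w \<noteq> v" by blast
  then have "(adj E)\<^sup>*\<^sup>* v w" using con v by (auto simp: connected_graph_def)
  then obtain x where "adj E v x" using w(2) by (cases rule: converse_rtranclpE) auto
  then have "{v,x} \<in> {e\<in>E. v\<in>e}" by (auto simp: adj_def)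
  moreover have "finite {e\<in>E. v\<in>e}" using sg_E(1)[OF sg] by simp
  ultimately have "card {e\<in>E. v\<in>e} > 0" by (auto simp: card_gt_0_iff)
  then show ?thesis unfolding deg_def by simp
qed

lemma cycle_adj:
  assumes cyc: "is_cycle V E c" and i: "i < length c"
  shows "adj E (c ! i) (c ! (Suc i mod length c))"
proof (cases "Suc i < length c")
  case True then show ?thesis using assms by (auto simp: is_cycle_def)
next
  case False
  then have s: "Suc i = length c" using i by simp
  have ne: "c \<noteq> []" using i by auto
  have "i = length c - 1" using s by simp
  then have "c ! i = last c" using ne by (simp add: last_conv_nth)
  moreover have "c ! (Suc i mod length c) = hd c" using s ne by (simp add: hd_conv_nth)
  ultimately show ?thesis using cyc by (auto simp: is_cycle_def)
qed

lemma idx: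
  assumes "3 \<le> (L::nat)" "i < L"
  shows "(i + L - 1) mod L < L \<and> Suc ((i + L - 1) mod L) mod L = i \<and> Suc i mod L \<noteq> i
         \<and> (i + L - 1) mod L \<noteq> i \<and> Suc i mod L \<noteq> (i + L - 1) mod L"
proof (cases "i = 0")
  case True
  have a: "(i + L - 1) mod L = L - 1" using True assms by simp
  have b: "Suc (L - 1) mod L = 0" using assms by simp
  have c: "Suc i mod L = 1" using True assms by simp
  show ?thesis unfolding a b c using True assms by simp
next
  case False
  have j: "(i + L - 1) mod L = i - 1"
  proof -
    have "i + L - 1 = (i - 1) + L" using False by simp
    then have "(i + L - 1) mod L = (i - 1) mod L" by (simp only: mod_add_self2)
    also have "\<dots> = i - 1" using assms by (intro mod_less) linarith
    finally show ?thesis .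
  qed
  have k: "Suc (i - 1) mod L = i" using False assms by simp
  show ?thesis
  proof (cases "Suc i < L")
    case True
    then have m: "Suc i mod L = Suc i" by simp
    show ?thesis unfolding j k m using \<open>i \<noteq> 0\<close> True assms by arith
  next
    case False
    then have m: "Suc i mod L = 0" using assms by (metis Suc_lessI mod_self)
    show ?thesis unfolding j k m using \<open>i \<noteq> 0\<close> False assms by arith
  qed
qed

lemma cycle_closed:
  assumes sg: "simple_graph V E" and cyc: "is_cycle V E c" and u: "u \<in> set c" and du: "deg E u = 2"
    and ax: "adj E u x"
  shows "x \<in> set c"
proof -
  let ?L = "length c"
  from u obtain i where i: "i < ?L" "c ! i = u" by (auto simp: in_set_conv_nth)
  have L3: "?L \<ge> 3" and dist: "distinct c" using cyc by (auto simp: is_cycle_def)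
  define j where "j = (i + ?L - 1) mod ?L"
  note I = idx[OF L3 i(1), folded j_def]
  define s where "s = c ! (Suc i mod ?L)"
  define p where "p = c ! j"
  have e1: "{u, s} \<in> E" using cycle_adj[OF cyc i(1)] i(2) by (simp add: adj_def s_def)
  have e2: "{p, u} \<in> E" using cycle_adj[OF cyc, of j] I i(2) by (simp add: adj_def p_def)
  have L0: "?L > 0" using i(1) by linarith
  have lt: "Suc i mod ?L < ?L" using L0 by simp
  have sp: "s \<noteq> p" using dist I lt by (simp add: s_def p_def nth_eq_iff_index_eq)
  have su: "s \<noteq> u" unfolding s_def i(2)[symmetric] using dist I lt i(1) by (simp add: nth_eq_iff_index_eq)
  have neq: "{u,s} \<noteq> {p,u}" using sp su by (auto simp: doubleton_eq_iff)
  have fin: "finite {e\<in>E. u\<in>e}" using sg_E(1)[OF sg] by simp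
  have sub: "{{u,s},{p,u}} \<subseteq> {e\<in>E. u\<in>e}" using e1 e2 by auto
  have "card {{u,s},{p,u}} = 2" using neq by simp
  then have eq: "{{u,s},{p,u}} = {e\<in>E. u\<in>e}" using card_subset_eq[OF fin sub] du unfolding deg_def by simp
  have "{u,x} \<in> {{u,s},{p,u}}" unfolding eq using ax by (simp add: adj_def)
  then have H: "{u,x} = {u,s} \<or> {u,x} = {p,u}" by simp
  have xin: "x \<in> {u,x}" by simp
  have "x \<in> {u,s} \<or> x \<in> {p,u}" using H xin by (elim disjE) simp_all
  then have "x \<in> {u, s, p}" by blast
  moreover have "s \<in> set c" "p \<in> set c" using I lt by (auto simp: s_def p_def)
  ultimately show ?thesis using u by auto
qed

lemma no_deg4:
  assumes B: "in_Bpp n V E" and v: "v \<in> V" "deg E v = 4" and oth: "\<forall>w\<in>V-{v}. deg E w = 2"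
  shows False
proof -
  from B obtain c1 c2 where sg: "simple_graph V E" and con: "connected_graph V E"
    and c: "is_cycle V E c1" "is_cycle V E c2" "set c1 \<inter> set c2 = {}"
    unfolding in_Bpp_def bicyclic_def by blast
  obtain c where cyc: "is_cycle V E c" and vc: "v \<notin> set c" using c by blast
  have ne: "c \<noteq> []" using cyc by (auto simp: is_cycle_def)
  have sub: "set c \<subseteq> V" using cyc by (auto simp: is_cycle_def)
  have "(adj E)\<^sup>*\<^sup>* (hd c) v" using con v(1) sub hd_in_set[OF ne] by (auto simp: connected_graph_def)
  moreover have cl: "\<And>x y. (adj E)\<^sup>*\<^sup>* x y \<Longrightarrow> x \<in> set c \<Longrightarrow> y \<in> set c"
  proof -
    fix x y assume "(adj E)\<^sup>*\<^sup>* x y" "x \<in> set c"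
    then show "y \<in> set c"
    proof (induction rule: rtranclp_induct)
      case base then show ?case .
    next
      case (step y z)
      then have yc: "y \<in> set c" by simp
      moreover have "deg E y = 2" using oth sub vc yc by auto
      ultimately show ?case using cycle_closed[OF sg cyc] step.hyps(2) by blast
    qed
  qed
  ultimately show False using vc ne by (meson hd_in_set)
qed



lemma arith_main:
  fixes a b m :: nat
  assumes "a \<ge> 1" "b \<le> a + 2" "a = 1 \<Longrightarrow> b \<noteq> 3"
  shows "4*(a+b+m) < m*(2+2*a) + a*(2+a+b) + 10"
proof -
  have m4: "m*(2+2*a) \<ge> 4*m" using assms(1) by simp
  consider "a = 1" | "a = 2" | "a = 3" | "a \<ge> 4" using assms(1) by linarith
  then show ?thesis
  proof cases
    case 1 then show ?thesis using assms m4 by simp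
  next
    case 2 then show ?thesis using assms m4 by simp
  next
    case 3 then show ?thesis using assms m4 by simp
  next
    case 4
    then have h: "a*(2+a+b) \<ge> 4*(2+a+b)" by (intro mult_right_mono) auto
    have "4*(a+b+m) < 4*m + 4*(2+a+b) + 10" by simp
    also have "\<dots> \<le> m*(2+2*a) + a*(2+a+b) + 10" using m4 h by (intro add_mono) auto
    finally show ?thesis .
  qed
qed

lemma lin_help: "(0::real) \<le> Q \<Longrightarrow> 4*(s::real) < X + Y + 10 \<Longrightarrow> 2*(4*s - 10) < Q + 2*X + 2*Y"
  by (smt (verit))

lemma comb:
  fixes V :: "'a set" and d :: "'a \<Rightarrow> nat"
  assumes fin: "finite V" and cV: "card V = n" and n4: "n \<ge> 4"
    and pos: "\<forall>v\<in>V. d v \<ge> 1" and sm: "(\<Sum>v\<in>V. d v) = 2*n+2"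
    and no4: "\<not>(\<exists>v\<in>V. d v = 4 \<and> (\<forall>w\<in>V-{v}. d w = 2))"
  defines "S \<equiv> (\<Sum>x\<in>V. \<Sum>y\<in>V. \<bar>real (d x) - real (d y)\<bar>)"
    and "M \<equiv> image_mset d (mset_set V)"
  shows "(M = mset ([3,3] @ replicate (n-2) 2) \<and> S = 2*(2*real n - 4)) \<or>
         (M \<noteq> mset ([3,3] @ replicate (n-2) 2) \<and> M = mset ([3,3,3] @ replicate (n-4) 2 @ [1]) \<and> S = 2*(4*real n - 10)) \<or>
         (M \<noteq> mset ([3,3] @ replicate (n-2) 2) \<and> M \<noteq> mset ([3,3,3] @ replicate (n-4) 2 @ [1]) \<and> S > 2*(4*real n - 10))"
proof -
  define P where "P = {v\<in>V. d v \<ge> 3}"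
  define Z where "Z = {v\<in>V. d v = 2}"
  define N where "N = {v\<in>V. d v = 1}"
  define a where "a = card N"
  define b where "b = card P"
  define m where "m = card Z"
  have VU: "V = P \<union> Z \<union> N" using pos by (force simp: P_def Z_def N_def)
  have d1: "P \<inter> Z = {}" "P \<inter> N = {}" "Z \<inter> N = {}" by (auto simp: P_def Z_def N_def)
  have Zd: "\<forall>v\<in>Z. d v = 2" and Nd: "\<forall>v\<in>N. d v = 1" by (auto simp: Z_def N_def)
  have Vc: "\<And>v. v \<in> V \<Longrightarrow> v \<in> P \<or> v \<in> Z \<or> v \<in> N" using VU by blast
  have fins: "finite P" "finite Z" "finite N" using fin by (auto simp: P_def Z_def N_def)
  have nabm: "n = a + b + m"
  proof -
    have i: "(P \<union> Z) \<inter> N = {}" using d1 by blast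
    have "card V = card (P \<union> Z) + card N" using card_Un_disjoint[of "P \<union> Z" N] fins i VU by simp
    also have "card (P \<union> Z) = b + m" using card_Un_disjoint[of P Z] d1 fins by (simp add: b_def m_def)
    finally show ?thesis using cV a_def by simp
  qed
  have cnt: "\<And>k. count M k = card {v\<in>V. d v = k}" unfolding M_def using fin by (rule count_img)
  have cnt1: "count M 1 = a" using cnt[of 1] by (simp add: a_def N_def)
  have cnt2: "count M 2 = m" using cnt[of 2] by (simp add: m_def Z_def)
  define t where "t = (\<lambda>v. real (d v) - 2)"
  have Zt: "(\<Sum>v\<in>Z. t v) = 0" by (simp add: Z_def t_def)
  have Nt: "(\<Sum>v\<in>N. t v) = - real a"
  proof -
    have "(\<Sum>v\<in>N. t v) = (\<Sum>v\<in>N. -1)" by (rule sum.cong) (auto simp: N_def t_def)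
    then show ?thesis by (simp add: a_def)
  qed
  have Vt: "(\<Sum>v\<in>V. t v) = 2"
  proof -
    have "(\<Sum>v\<in>V. t v) = (\<Sum>v\<in>V. real (d v)) - 2 * real n" using cV by (simp add: t_def sum_subtractf)
    also have "(\<Sum>v\<in>V. real (d v)) = real (2*n+2)" using sm by (metis of_nat_sum)
    finally show ?thesis by simp
  qed
  have TP: "(\<Sum>v\<in>P. t v) = 2 + real a"
    using Vt sum3[OF fin VU d1, of t] Zt Nt by linarith
  have tP1: "\<And>v. v \<in> P \<Longrightarrow> t v \<ge> 1" by (auto simp: P_def t_def)
  have bTP: "real b \<le> 2 + real a"
  proof -
    have "(\<Sum>v\<in>P. (1::real)) \<le> (\<Sum>v\<in>P. t v)" using tP1 by (intro sum_mono) auto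
    then show ?thesis using TP by (simp add: b_def)
  qed
  have ba: "b \<le> a + 2" using bTP by linarith
  have TPex: "(\<Sum>v\<in>P. t v - 1) = 2 + real a - real b"
  proof -
    have "(\<Sum>v\<in>P. t v - 1) = (\<Sum>v\<in>P. t v) - (\<Sum>v\<in>P. 1)" by (rule sum_subtractf)
    then show ?thesis using TP by (simp add: b_def)
  qed
  have all3: "\<forall>v\<in>P. d v = 3" if "b = a + 2"
  proof -
    have "(\<Sum>v\<in>P. t v - 1) = 0" using TPex that by simp
    moreover have "(\<Sum>v\<in>P. t v - 1) = 0 \<longleftrightarrow> (\<forall>v\<in>P. t v - 1 = 0)"
      by (rule sum_nonneg_eq_0_iff[OF fins(1)]) (use tP1 in auto)
    ultimately have "\<forall>v\<in>P. t v - 1 = 0" by blast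
    then show ?thesis by (auto simp: t_def)
  qed
  define f where "f = (\<lambda>x y. \<bar>real (d x) - real (d y)\<bar>)"
  define Q where "Q = (\<Sum>x\<in>P. \<Sum>y\<in>P. f x y)"
  have Q0: "Q \<ge> 0" unfolding Q_def f_def by (intro sum_nonneg) auto
  have Q3: "Q = 0" if "\<forall>v\<in>P. d v = 3"
    unfolding Q_def f_def using that by simp
  have g: "\<And>x. (\<Sum>y\<in>V. f x y) = (\<Sum>y\<in>P. f x y) + (\<Sum>y\<in>Z. f x y) + (\<Sum>y\<in>N. f x y)"
    using sum3[OF fin VU d1] .
  have SP: "(\<Sum>x\<in>P. \<Sum>y\<in>V. f x y) = Q + real m * (2 + real a) + real a * (2 + real a + real b)"
  proof -
    have A: "(\<Sum>y\<in>Z. f x y) = real m * t x" if "x \<in> P" for x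
    proof -
      have "(\<Sum>y\<in>Z. f x y) = (\<Sum>y\<in>Z. t x)" using that by (intro sum.cong) (auto simp: Z_def P_def f_def t_def)
      then show ?thesis by (simp add: m_def)
    qed
    have B: "(\<Sum>y\<in>N. f x y) = real a * (t x + 1)" if "x \<in> P" for x
    proof -
      have "(\<Sum>y\<in>N. f x y) = (\<Sum>y\<in>N. t x + 1)" using that by (intro sum.cong) (auto simp: N_def P_def f_def t_def)
      then show ?thesis by (simp add: a_def)
    qed
    have "(\<Sum>x\<in>P. \<Sum>y\<in>V. f x y) = (\<Sum>x\<in>P. (\<Sum>y\<in>P. f x y) + real m * t x + real a * (t x + 1))"
      using g A B by (intro sum.cong) auto
    also have "\<dots> = Q + real m * (\<Sum>x\<in>P. t x) + real a * ((\<Sum>x\<in>P. t x) + real b)"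
      by (simp add: Q_def sum.distrib sum_distrib_left distrib_left b_def)
    finally show ?thesis using TP by simp
  qed
  have SZ: "(\<Sum>x\<in>Z. \<Sum>y\<in>V. f x y) = real m * (2 + 2 * real a)"
  proof -
    have "(\<Sum>y\<in>V. f x y) = 2 + 2 * real a" if "x \<in> Z" for x
    proof -
      have "(\<Sum>y\<in>P. f x y) = (\<Sum>y\<in>P. t y)" using that by (intro sum.cong) (auto simp: Z_def P_def f_def t_def)
      moreover have "(\<Sum>y\<in>Z. f x y) = 0" using that by (simp add: Z_def f_def)
      moreover have "(\<Sum>y\<in>N. f x y) = (\<Sum>y\<in>N. 1)" using that by (intro sum.cong) (auto simp: Z_def N_def f_def)
      ultimately show ?thesis using g[of x] TP by (simp add: a_def)
    qed
    then show ?thesis by (simp add: m_def)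
  qed
  have SN: "(\<Sum>x\<in>N. \<Sum>y\<in>V. f x y) = real a * (2 + real a + real b + real m)"
  proof -
    have "(\<Sum>y\<in>V. f x y) = 2 + real a + real b + real m" if "x \<in> N" for x
    proof -
      have "(\<Sum>y\<in>P. f x y) = (\<Sum>y\<in>P. t y + 1)" using that by (intro sum.cong) (auto simp: N_def P_def f_def t_def)
      also have "\<dots> = 2 + real a + real b" using TP by (simp add: sum.distrib b_def)
      finally have 1: "(\<Sum>y\<in>P. f x y) = 2 + real a + real b" .
      have "(\<Sum>y\<in>Z. f x y) = (\<Sum>y\<in>Z. 1)" using that by (intro sum.cong) (auto simp: Z_def N_def f_def)
      moreover have "(\<Sum>y\<in>N. f x y) = 0" using that by (simp add: N_def f_def)
      ultimately show ?thesis using g[of x] 1 by (simp add: m_def)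
    qed
    then show ?thesis by (simp add: a_def)
  qed
  have Sdec: "S = Q + 2 * real m * (2 + 2 * real a) + 2 * real a * (2 + real a + real b)"
  proof -
    have "S = (\<Sum>x\<in>V. \<Sum>y\<in>V. f x y)" by (simp add: S_def f_def)
    also have "\<dots> = (\<Sum>x\<in>P. \<Sum>y\<in>V. f x y) + (\<Sum>x\<in>Z. \<Sum>y\<in>V. f x y) + (\<Sum>x\<in>N. \<Sum>y\<in>V. f x y)"
      using sum3[OF fin VU d1] .
    finally show ?thesis using SP SZ SN by (simp add: algebra_simps)
  qed
  have L1c: "\<And>k. count (mset ([3,3] @ replicate (n-2) (2::nat))) k = (if k = 3 then 2 else 0) + (if k = 2 then n-2 else 0)"
    by simp
  have L2c: "\<And>k. count (mset ([3,3,3] @ replicate (n-4) (2::nat) @ [1])) k = (if k = 3 then 3 else 0) + (if k = 2 then n-4 else 0) + (if k = 1 then 1 else 0)"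
    by simp
  show ?thesis
  proof (cases "a = 0")
    case True
    have "b \<noteq> 0"
    proof
      assume "b = 0"
      then have "P = {}" using fins by (simp add: b_def)
      then show False using TP by simp
    qed
    moreover have "b \<noteq> 1"
    proof
      assume "b = 1"
      then obtain v where Pv: "P = {v}" by (auto simp: b_def card_Suc_eq)
      have "t v = 2" using TP True Pv by simp
      then have "d v = 4" by (simp add: t_def)
      moreover have "v \<in> V" using Pv by (auto simp: P_def)
      moreover have "\<forall>w\<in>V-{v}. d w = 2"
      proof
        fix w assume w: "w \<in> V - {v}"
        have "N = {}" using True fins by (simp add: a_def)
        then have "w \<in> Z" using w Vc[of w] Pv by blast
        then show "d w = 2" using Zd by blast
      qed
      ultimately show False using no4 by blast
    qed
    ultimately have b2: "b = 2" using ba True by linarith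
    have A3: "\<forall>v\<in>P. d v = 3" using all3 b2 True by simp
    have N0: "N = {}" using True fins by (simp add: a_def)
    have dv: "\<forall>v\<in>V. d v = 2 \<or> d v = 3" using Vc A3 N0 Zd by blast
    have PV: "{v\<in>V. d v = 3} = P" using A3 by (auto simp: P_def)
    have Mc: "M = mset ([3,3] @ replicate (n-2) 2)"
    proof (rule multiset_eqI)
      fix k
      show "count M k = count (mset ([3,3] @ replicate (n-2) 2)) k"
      proof -
        consider "k = 3" | "k = 2" | "k \<noteq> 2 \<and> k \<noteq> 3" by blast
        then show ?thesis
        proof cases
          case 1 then show ?thesis using cnt PV b2 by (simp add: b_def)
        next
          case 2 then show ?thesis using cnt2 nabm b2 True by simp
        next
          case 3
          then have E: "{v\<in>V. d v = k} = {}" using dv by auto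
          show ?thesis unfolding cnt E using 3 by simp
        qed
      qed
    qed
    have "S = 2*(2*real n - 4)" using Sdec Q3[OF A3] True nabm b2 by simp
    then show ?thesis using Mc by simp
  next
    case False
    have ne1: "M \<noteq> mset ([3,3] @ replicate (n-2) 2)"
    proof
      assume "M = mset ([3,3] @ replicate (n-2) 2)"
      then have "count M 1 = 0" by simp
      then show False using cnt1 False by simp
    qed
    show ?thesis
    proof (cases "a = 1 \<and> b = 3")
      case True
      have A3: "\<forall>v\<in>P. d v = 3" using all3 True by simp
      have PV: "{v\<in>V. d v = 3} = P" using A3 by (auto simp: P_def)
      have dv: "\<forall>v\<in>V. d v = 1 \<or> d v = 2 \<or> d v = 3" using Vc A3 Zd Nd by blast
      have Mc: "M = mset ([3,3,3] @ replicate (n-4) 2 @ [1])"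
      proof (rule multiset_eqI)
        fix k
        show "count M k = count (mset ([3,3,3] @ replicate (n-4) 2 @ [1])) k"
        proof -
          consider "k = 3" | "k = 2" | "k = 1" | "k \<noteq> 1 \<and> k \<noteq> 2 \<and> k \<noteq> 3" by blast
          then show ?thesis
          proof cases
            case 1 then show ?thesis using cnt PV True by (simp add: b_def)
          next
            case 2 then show ?thesis using cnt2 nabm True by simp
          next
            case 3 then show ?thesis using cnt1 True by simp
          next
            case 4
            then have E: "{v\<in>V. d v = k} = {}" using dv by auto
            show ?thesis unfolding cnt E using 4 by simp
          qed
        qed
      qed
      have "S = 2*(4*real n - 10)" using Sdec Q3[OF A3] True nabm by simp
      then show ?thesis using Mc ne1 by simp
    next
      case F2: False
      have ar: "4*(a+b+m) < m*(2+2*a) + a*(2+a+b) + 10"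
        using arith_main[of a b m] False F2 ba by linarith
      then have "real (4*(a+b+m)) < real (m*(2+2*a) + a*(2+a+b) + 10)" by (simp only: of_nat_less_iff)
      then have h: "4*(real a + real b + real m) < real m*(2+2*real a) + real a*(2+real a+real b) + 10"
        by (simp only: of_nat_add of_nat_mult of_nat_numeral)
      have rn: "real n = real a + real b + real m" using nabm by simp
      have gt: "S > 2*(4*real n - 10)" unfolding Sdec rn mult.assoc by (rule lin_help[OF Q0 h])
      have ne2: "M \<noteq> mset ([3,3,3] @ replicate (n-4) 2 @ [1])"
      proof
        assume H: "M = mset ([3,3,3] @ replicate (n-4) 2 @ [1])"
        then have "count M 1 = 1" by simp
        then have a1: "a = 1" using cnt1 by simp
        have "count M 2 = n - 4" using H by simp
        then have "m = n - 4" using cnt2 by simp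
        then show False using nabm a1 F2 n4 by linarith
      qed
      show ?thesis using ne1 ne2 gt by simp
    qed
  qed
qed


theorem theorem13:
  fixes V :: "'a set" and E :: "'a set set" and n :: nat
  assumes "n \<ge> 7" and "in_Bpp n V E"
  shows "irr_t V E \<ge> 2 * real n - 4 \<and>
         (irr_t V E = 2 * real n - 4 \<longleftrightarrow> degree_sequence V E = [3, 3] @ replicate (n - 2) 2) \<and>
         (degree_sequence V E \<noteq> [3, 3] @ replicate (n - 2) 2 \<longrightarrow>
            irr_t V E \<ge> 4 * real n - 10 \<and>
            (irr_t V E = 4 * real n - 10 \<longleftrightarrow>
             degree_sequence V E = [3, 3, 3] @ replicate (n - 4) 2 @ [1]))"
proof -
  from assms(2) have sg: "simple_graph V E" and con: "connected_graph V E"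
    and cE: "card E = card V + 1" and cV: "card V = n"
    unfolding in_Bpp_def bicyclic_def by auto
  have fin: "finite V" using sg simple_graph_def by auto
  have pos: "\<forall>v\<in>V. deg E v \<ge> 1" using deg_pos[OF sg con] cV assms(1) by auto
  have sm: "(\<Sum>v\<in>V. deg E v) = 2*n+2" using handshake[OF sg] cE cV by simp
  have no4: "\<not>(\<exists>v\<in>V. deg E v = 4 \<and> (\<forall>w\<in>V-{v}. deg E w = 2))"
    using no_deg4[OF assms(2)] by blast
  have n4: "n \<ge> 4" using assms(1) by simp
  note C = comb[OF fin cV n4 pos sm no4]
  define S where "S = (\<Sum>x\<in>V. \<Sum>y\<in>V. \<bar>real (deg E x) - real (deg E y)\<bar>)"
  define M where "M = image_mset (deg E) (mset_set V)"
  have irr: "irr_t V E = S / 2" by (simp add: irr_t_def S_def)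
  have ds1: "degree_sequence V E = [3,3] @ replicate (n-2) 2 \<longleftrightarrow> M = mset ([3,3] @ replicate (n-2) 2)"
    unfolding degree_sequence_def M_def by (rule degseq_iff) (simp add: sorted_append)
  have ds2: "degree_sequence V E = [3,3,3] @ replicate (n-4) 2 @ [1] \<longleftrightarrow> M = mset ([3,3,3] @ replicate (n-4) 2 @ [1])"
    unfolding degree_sequence_def M_def by (rule degseq_iff) (simp add: sorted_append)
  have rn: "real n \<ge> 7" using assms(1) by simp
  from C[folded S_def M_def] show ?thesis
    unfolding irr ds1 ds2 using rn by auto
qed

end
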